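(* Let $g>0$, $p_0<0$, $\gamma\in\mathbb{R}$, and let $\lambda_*>0$ with $\lambda_*-2\gamma p_0>0$ and $g-\gamma\sqrt{\lambda_*}\neq0$ satisfy the dispersion relation $$\frac{\lambda_*}{g-\gamma\sqrt{\lambda_*}}+\tanh\!\Big(\frac{2p_0}{\sqrt{\lambda_*}+\sqrt{\lambda_*-2\gamma p_0}}\Big)=0.$$ For $p\in[p_0,0]$ put $r(p)=\sqrt{\lambda_*-2\gamma p}$ and $r_0=r(p_0)$, and define $$H(p)=\frac{2(p-p_0)}{r(p)+r_0},\qquad Q^*=\lambda_*-\frac{4gp_0}{\sqrt{\lambda_*}+r_0},\qquad m(q,p)=\frac{r_0}{r(p)}\sinh(H(p))\cos q .$$ Assume $$\Delta:=(g-\gamma\sqrt{\lambda_*})^2-\lambda_*^2\neq0\qquad\text{and}\qquad 2gp_0+\lambda_*r_0+\sqrt{\lambda_*}\,r_0^2\neq0,$$ and set $$C_0=\frac{\sqrt{\lambda_*}\,\big[3g(g-\gamma\sqrt{\lambda_*})+\lambda_*(\gamma^2-\lambda_* )\big]\,(r_0+\sqrt{\lambda_*})}{4\,\Delta\,\big[2gp_0+\lambda_*r_0+\sqrt{\lambda_*}\,r_0^2\big]},\qquad C_2=\frac{3g(g-\gamma\sqrt{\lambda_*})+\lambda_*(\gamma^2-3\lambda_* )}{8\lambda_*^{5/2}} .$$ Define $$\begin{aligned}u(q,p)={}&r_0^2\Big[C_0\frac{H(p)}{r(p)}-\gamma\frac{1-\cosh(2H(p))}{8r^3(p)}+\frac{\sinh(2H(p))}{4r^2(p)}\Big]\\&+r_0^2\cos(2q)\Big[C_2\frac{\sinh(2H(p))}{r(p)}-\gamma\frac{1-\cosh(2H(p))}{8r^3(p)}+\frac{\sinh(2H(p))}{4r^2(p)}\Big],\end{aligned}$$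 and $h^*(q,p;b)=H(p)+b\,m(q,p)+b^2u(q,p)$. Then, with vorticity $\gamma$ and $Q=Q^*$: - the coefficients of $b^0,b^1,b^2$ in $\mathcal{H}[h^*](q,p)$ vanish identically on $R=[-\pi,\pi]\times[p_0,0]$; - the coefficients of $b^0,b^1,b^2$ in $\mathcal{B}_0[h^*](q)$ vanish for all $q$; - $\mathcal{B}_1[h^*]\equiv0$. That is, $\mathcal{H}[h^*]=\mathcal{O}(b^3)$, $\mathcal{B}_0[h^*]=\mathcal{O}(b^3)$ and $\mathcal{B}_1[h^*]=0$.
   Context: For a function $h(q,p)$ on the rectangle $R=[-\pi,\pi]\times[p_0,0]$, constants $g>0$ (gravity), $\gamma\in\mathbb{R}$ (vorticity), $Q\in\mathbb{R}$ (hydraulic head) and $p_0<0$ (relative mass flux), define $$\mathcal{H}[h]=(1+h_q^2)h_{pp}-2h_ph_qh_{pq}+h_p^2h_{qq}-\gamma h_p^3\quad\text{on } R,$$ $$\mathcal{B}_0[h](q)=1+h_q^2(q,0)+\big(2gh(q,0)-Q\big)h_p^2(q,0),\qquad \mathcal{B}_1[h](q)=h(q,p_0).$$ These are the equations for the height function in the Dubreil-Jacotin formulation of periodic travelling water waves with constant vorticity over a flat bed; $h$ is even and $2\pi$-periodic in $q$. When $h$ depends polynomially on a parameter $b$, these expressions are polynomials in $b$ with coefficients that are functions of $(q,p)$ (respectively of $q$). "$=\mathcal{O}(b^k)$" means the coefficients of $b^0,\dots,b^{k-1}$ vanish identically. The function $H$ is the laminar (trivial) solution and $m$ the solution of the linearised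 problem; for $\gamma=0$ the function $u$ reduces to the irrotational second-order term. *)

theory Defs
  imports "HOL-Analysis.Analysis"
begin

definition pd_q :: "(real \<Rightarrow> real \<Rightarrow> real) \<Rightarrow> real \<Rightarrow> real \<Rightarrow> real" where
  "pd_q h q p = deriv (\<lambda>x. h x p) q"

definition pd_p :: "(real \<Rightarrow> real \<Rightarrow> real) \<Rightarrow> real \<Rightarrow> real \<Rightarrow> real" where
  "pd_p h q p = deriv (\<lambda>y. h q y) p"

definition opH :: "real \<Rightarrow> (real \<Rightarrow> real \<Rightarrow> real) \<Rightarrow> real \<Rightarrow> real \<Rightarrow> real" where
  "opH \<gamma> h q p =
     (1 + (pd_q h q p)^2) * pd_p (pd_p h) q p
     - 2 * pd_p h q p * pd_q h q p * pd_q (pd_p h) q p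
     + (pd_p h q p)^2 * pd_q (pd_q h) q p
     - \<gamma> * (pd_p h q p)^3"

definition opB0 :: "real \<Rightarrow> real \<Rightarrow> (real \<Rightarrow> real \<Rightarrow> real) \<Rightarrow> real \<Rightarrow> real" where
  "opB0 g Q h q = 1 + (pd_q h q 0)^2 + (2 * g * h q 0 - Q) * (pd_p h q 0)^2"

definition opB1 :: "real \<Rightarrow> (real \<Rightarrow> real \<Rightarrow> real) \<Rightarrow> real \<Rightarrow> real" where
  "opB1 p0 h q = h q p0"

definition rr :: "real \<Rightarrow> real \<Rightarrow> real \<Rightarrow> real" where
  "rr lam \<gamma> p = sqrt (lam - 2 * \<gamma> * p)"

definition HH :: "real \<Rightarrow> real \<Rightarrow> real \<Rightarrow> real \<Rightarrow> real" where
  "HH lam \<gamma> p0 p = 2 * (p - p0) / (rr lam \<gamma> p + rr lam \<gamma> p0)"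

definition Qstar :: "real \<Rightarrow> real \<Rightarrow> real \<Rightarrow> real \<Rightarrow> real" where
  "Qstar g lam \<gamma> p0 = lam - 4 * g * p0 / (sqrt lam + rr lam \<gamma> p0)"

definition mm :: "real \<Rightarrow> real \<Rightarrow> real \<Rightarrow> real \<Rightarrow> real \<Rightarrow> real" where
  "mm lam \<gamma> p0 q p = rr lam \<gamma> p0 / rr lam \<gamma> p * sinh (HH lam \<gamma> p0 p) * cos q"

definition Delta :: "real \<Rightarrow> real \<Rightarrow> real \<Rightarrow> real" where
  "Delta g lam \<gamma> = (g - \<gamma> * sqrt lam)^2 - lam^2"

definition C0 :: "real \<Rightarrow> real \<Rightarrow> real \<Rightarrow> real \<Rightarrow> real" where
  "C0 g lam \<gamma> p0 =
     sqrt lam * (3 * g * (g - \<gamma> * sqrt lam) + lam * (\<gamma>^2 - lam)) * (rr lam \<gamma> p0 + sqrt lam)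
     / (4 * Delta g lam \<gamma> * (2 * g * p0 + lam * rr lam \<gamma> p0 + sqrt lam * (rr lam \<gamma> p0)^2))"

definition C2 :: "real \<Rightarrow> real \<Rightarrow> real \<Rightarrow> real" where
  "C2 g lam \<gamma> = (3 * g * (g - \<gamma> * sqrt lam) + lam * (\<gamma>^2 - 3 * lam)) / (8 * lam powr (5/2))"

definition uu :: "real \<Rightarrow> real \<Rightarrow> real \<Rightarrow> real \<Rightarrow> real \<Rightarrow> real \<Rightarrow> real" where
  "uu g lam \<gamma> p0 q p =
     (let r0 = rr lam \<gamma> p0; r = rr lam \<gamma> p; Hp = HH lam \<gamma> p0 p in
       r0^2 * (C0 g lam \<gamma> p0 * Hp / r - \<gamma> * (1 - cosh (2 * Hp)) / (8 * r^3) + sinh (2 * Hp) / (4 * r^2))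
     + r0^2 * cos (2 * q) * (C2 g lam \<gamma> * sinh (2 * Hp) / r - \<gamma> * (1 - cosh (2 * Hp)) / (8 * r^3)
                              + sinh (2 * Hp) / (4 * r^2)))"

definition hstar :: "real \<Rightarrow> real \<Rightarrow> real \<Rightarrow> real \<Rightarrow> real \<Rightarrow> real \<Rightarrow> real \<Rightarrow> real" where
  "hstar g lam \<gamma> p0 b q p = HH lam \<gamma> p0 p + b * mm lam \<gamma> p0 q p + b^2 * uu g lam \<gamma> p0 q p"

end

theory Submission
  imports Defs
begin


lemma pd_struct:
  fixes Hf A U0 U2 H1 A1 U01 U21 H2 A2 U02 U22 :: "real \<Rightarrow> real" and S :: "real set"
  assumes S: "open S" "p \<in> S"
    and dH: "\<And>y. y \<in> S \<Longrightarrow> (Hf has_real_derivative H1 y) (at y)"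
    and dH1: "\<And>y. y \<in> S \<Longrightarrow> (H1 has_real_derivative H2 y) (at y)"
    and dA: "\<And>y. y \<in> S \<Longrightarrow> (A has_real_derivative A1 y) (at y)"
    and dA1: "\<And>y. y \<in> S \<Longrightarrow> (A1 has_real_derivative A2 y) (at y)"
    and dU0: "\<And>y. y \<in> S \<Longrightarrow> (U0 has_real_derivative U01 y) (at y)"
    and dU01: "\<And>y. y \<in> S \<Longrightarrow> (U01 has_real_derivative U02 y) (at y)"
    and dU2: "\<And>y. y \<in> S \<Longrightarrow> (U2 has_real_derivative U21 y) (at y)"
    and dU21: "\<And>y. y \<in> S \<Longrightarrow> (U21 has_real_derivative U22 y) (at y)"
    and h: "h = (\<lambda>q y. Hf y + b * (A y * cos q) + b^2 * (U0 y + U2 y * cos (2*q)))"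
  shows "pd_q h q p = b * (- A p * sin q) + b^2 * (-2 * U2 p * sin (2*q))"
    and "pd_p h q p = H1 p + b * (A1 p * cos q) + b^2 * (U01 p + U21 p * cos (2*q))"
    and "pd_q (pd_q h) q p = b * (- A p * cos q) + b^2 * (-4 * U2 p * cos (2*q))"
    and "pd_q (pd_p h) q p = b * (- A1 p * sin q) + b^2 * (-2 * U21 p * sin (2*q))"
    and "pd_p (pd_p h) q p = H2 p + b * (A2 p * cos q) + b^2 * (U02 p + U22 p * cos (2*q))"
proof -
  have q1: "pd_q h x y = - b * A y * sin x - 2 * b^2 * U2 y * sin (2*x)" for x y
    unfolding pd_q_def h
    by (rule DERIV_imp_deriv) (auto intro!: derivative_eq_intros simp: algebra_simps)
  then show "pd_q h q p = b * (- A p * sin q) + b^2 * (-2 * U2 p * sin (2*q))" by (simp add: algebra_simps)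
  have p1: "pd_p h x y = H1 y + b * (A1 y * cos x) + b^2 * (U01 y + U21 y * cos (2*x))" if "y \<in> S" for x y
    unfolding pd_p_def h
    by (rule DERIV_imp_deriv) (auto intro!: derivative_eq_intros dH dA dU0 dU2 that simp: algebra_simps)
  then show "pd_p h q p = H1 p + b * (A1 p * cos q) + b^2 * (U01 p + U21 p * cos (2*q))" using S by auto
  show "pd_q (pd_q h) q p = b * (- A p * cos q) + b^2 * (-4 * U2 p * cos (2*q))"
    unfolding pd_q_def[of "pd_q h"] q1
    by (rule DERIV_imp_deriv) (auto intro!: derivative_eq_intros simp: algebra_simps)
  show "pd_q (pd_p h) q p = b * (- A1 p * sin q) + b^2 * (-2 * U21 p * sin (2*q))"
    unfolding pd_q_def[of "pd_p h"] p1[OF S(2)]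
    by (rule DERIV_imp_deriv) (auto intro!: derivative_eq_intros simp: algebra_simps)
  show "pd_p (pd_p h) q p = H2 p + b * (A2 p * cos q) + b^2 * (U02 p + U22 p * cos (2*q))"
    unfolding pd_p_def[of "pd_p h"]
  proof (rule DERIV_imp_deriv, rule has_field_derivative_transform_within_open[OF _ S])
    show "((\<lambda>y. H1 y + b * (A1 y * cos q) + b^2 * (U01 y + U21 y * cos (2*q))) has_real_derivative
      H2 p + b * (A2 p * cos q) + b^2 * (U02 p + U22 p * cos (2*q))) (at p)"
      by (auto intro!: derivative_eq_intros dH1 dA1 dU01 dU21 S simp: algebra_simps)
    show "\<And>x. x \<in> S \<Longrightarrow> H1 x + b * (A1 x * cos q) + b^2 * (U01 x + U21 x * cos (2*q)) = pd_p h q x"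
      using p1 by auto
  qed
qed



definition AF :: "real \<Rightarrow> real \<Rightarrow> real \<Rightarrow> real \<Rightarrow> real" where "AF lam \<gamma> p0 y = rr lam \<gamma> p0 / rr lam \<gamma> y * sinh (HH lam \<gamma> p0 y)"
definition AF1 :: "real \<Rightarrow> real \<Rightarrow> real \<Rightarrow> real \<Rightarrow> real" where "AF1 lam \<gamma> p0 y = rr lam \<gamma> p0 * (cosh (HH lam \<gamma> p0 y) / rr lam \<gamma> y ^ 2 + \<gamma> * sinh (HH lam \<gamma> p0 y) / rr lam \<gamma> y ^ 3)"
definition AF2 :: "real \<Rightarrow> real \<Rightarrow> real \<Rightarrow> real \<Rightarrow> real" where "AF2 lam \<gamma> p0 y = rr lam \<gamma> p0 * (sinh (HH lam \<gamma> p0 y) / rr lam \<gamma> y ^ 3 + 3 * \<gamma> * cosh (HH lam \<gamma> p0 y) / rr lam \<gamma> y ^ 4 + 3 * \<gamma>^2 * sinh (HH lam \<gamma> p0 y) / rr lam \<gamma> y ^ 5)"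
definition KF :: "real \<Rightarrow> real \<Rightarrow> real \<Rightarrow> real \<Rightarrow> real" where "KF lam \<gamma> p0 y = - \<gamma> * (1 - cosh (2 * HH lam \<gamma> p0 y)) / (8 * rr lam \<gamma> y ^ 3) + sinh (2 * HH lam \<gamma> p0 y) / (4 * rr lam \<gamma> y ^ 2)"
definition KF1 :: "real \<Rightarrow> real \<Rightarrow> real \<Rightarrow> real \<Rightarrow> real" where "KF1 lam \<gamma> p0 y = 3 * \<gamma>^2 * (cosh (2 * HH lam \<gamma> p0 y) - 1) / (8 * rr lam \<gamma> y ^ 5) + 3 * \<gamma> * sinh (2 * HH lam \<gamma> p0 y) / (4 * rr lam \<gamma> y ^ 4) + cosh (2 * HH lam \<gamma> p0 y) / (2 * rr lam \<gamma> y ^ 3)"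
definition KF2 :: "real \<Rightarrow> real \<Rightarrow> real \<Rightarrow> real \<Rightarrow> real" where "KF2 lam \<gamma> p0 y = 15 * \<gamma>^3 * (cosh (2 * HH lam \<gamma> p0 y) - 1) / (8 * rr lam \<gamma> y ^ 7) + 15 * \<gamma>^2 * sinh (2 * HH lam \<gamma> p0 y) / (4 * rr lam \<gamma> y ^ 6) + 3 * \<gamma> * cosh (2 * HH lam \<gamma> p0 y) / rr lam \<gamma> y ^ 5 + sinh (2 * HH lam \<gamma> p0 y) / rr lam \<gamma> y ^ 4"
definition GF :: "real \<Rightarrow> real \<Rightarrow> real \<Rightarrow> real \<Rightarrow> real" where "GF lam \<gamma> p0 y = HH lam \<gamma> p0 y / rr lam \<gamma> y"
definition GF1 :: "real \<Rightarrow> real \<Rightarrow> real \<Rightarrow> real \<Rightarrow> real" where "GF1 lam \<gamma> p0 y = 1 / rr lam \<gamma> y ^ 2 + \<gamma> * HH lam \<gamma> p0 y / rr lam \<gamma> y ^ 3"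
definition GF2 :: "real \<Rightarrow> real \<Rightarrow> real \<Rightarrow> real \<Rightarrow> real" where "GF2 lam \<gamma> p0 y = 3 * \<gamma> / rr lam \<gamma> y ^ 4 + 3 * \<gamma>^2 * HH lam \<gamma> p0 y / rr lam \<gamma> y ^ 5"
definition TF :: "real \<Rightarrow> real \<Rightarrow> real \<Rightarrow> real \<Rightarrow> real" where "TF lam \<gamma> p0 y = sinh (2 * HH lam \<gamma> p0 y) / rr lam \<gamma> y"
definition TF1 :: "real \<Rightarrow> real \<Rightarrow> real \<Rightarrow> real \<Rightarrow> real" where "TF1 lam \<gamma> p0 y = 2 * cosh (2 * HH lam \<gamma> p0 y) / rr lam \<gamma> y ^ 2 + \<gamma> * sinh (2 * HH lam \<gamma> p0 y) / rr lam \<gamma> y ^ 3"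
definition TF2 :: "real \<Rightarrow> real \<Rightarrow> real \<Rightarrow> real \<Rightarrow> real" where "TF2 lam \<gamma> p0 y = 4 * sinh (2 * HH lam \<gamma> p0 y) / rr lam \<gamma> y ^ 3 + 6 * \<gamma> * cosh (2 * HH lam \<gamma> p0 y) / rr lam \<gamma> y ^ 4 + 3 * \<gamma>^2 * sinh (2 * HH lam \<gamma> p0 y) / rr lam \<gamma> y ^ 5"

context
  fixes lam \<gamma> p0 :: real
  assumes hlam: "lam > 0" and hlam2: "lam - 2 * \<gamma> * p0 > 0"
begin

abbreviation "SS \<equiv> {y::real. 2 * \<gamma> * y < lam}"
abbreviation "R \<equiv> rr lam \<gamma>"
abbreviation "HF \<equiv> HH lam \<gamma> p0"
abbreviation "AF' \<equiv> AF lam \<gamma> p0"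
abbreviation "AF1' \<equiv> AF1 lam \<gamma> p0"
abbreviation "AF2' \<equiv> AF2 lam \<gamma> p0"
abbreviation "KF' \<equiv> KF lam \<gamma> p0"
abbreviation "KF1' \<equiv> KF1 lam \<gamma> p0"
abbreviation "KF2' \<equiv> KF2 lam \<gamma> p0"
abbreviation "GF' \<equiv> GF lam \<gamma> p0"
abbreviation "GF1' \<equiv> GF1 lam \<gamma> p0"
abbreviation "GF2' \<equiv> GF2 lam \<gamma> p0"
abbreviation "TF' \<equiv> TF lam \<gamma> p0"
abbreviation "TF1' \<equiv> TF1 lam \<gamma> p0"
abbreviation "TF2' \<equiv> TF2 lam \<gamma> p0"

lemma openSS: "open SS"
  by (rule open_Collect_less) (auto intro!: continuous_intros)

lemma R_pos: "y \<in> SS \<Longrightarrow> R y > 0"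
  by (simp add: rr_def)

lemma R_sq: "y \<in> SS \<Longrightarrow> R y ^ 2 = lam - 2 * \<gamma> * y"
  by (simp add: rr_def)

lemma p0SS: "p0 \<in> SS" using hlam2 by simp

lemma dR: "y \<in> SS \<Longrightarrow> (R has_real_derivative - \<gamma> / R y) (at y)"
  unfolding rr_def
  by (auto intro!: derivative_eq_intros simp: field_simps)

lemma dHF: assumes y: "y \<in> SS" shows "(HF has_real_derivative 1 / R y) (at y)"
proof -
  have r: "R y > 0" "R p0 > 0" using R_pos y p0SS by auto
  have s: "R y ^ 2 = lam - 2 * \<gamma> * y" "R p0 ^ 2 = lam - 2 * \<gamma> * p0" using R_sq y p0SS by auto
  have e: "(2 * (R y + R p0) - 2 * (y - p0) * (- \<gamma> / R y)) / (R y + R p0)^2 = 1 / R y"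
  proof -
    have a: "2 * R y * (R y + R p0) + 2 * (y - p0) * \<gamma> = (R y + R p0)^2"
      using s by (simp add: power2_eq_square algebra_simps)
    have "(2 * (R y + R p0) - 2 * (y - p0) * (- \<gamma> / R y)) * R y = (R y + R p0)^2"
      using r(1) a by (simp add: field_simps)
    then show ?thesis using r by (simp add: field_simps)
  qed
  show ?thesis
    unfolding HH_def
    apply (rule DERIV_cong[OF _ e])
    using r by (auto intro!: derivative_eq_intros dR y simp: power2_eq_square)
qed


lemma dH1: "y \<in> SS \<Longrightarrow> ((\<lambda>y. 1 / R y) has_real_derivative \<gamma> / R y ^ 3) (at y)"
  using R_pos[of y] by (auto intro!: derivative_eq_intros dR simp: field_simps power2_eq_square power3_eq_cube)


lemma dAF: assumes y: "y \<in> SS" shows "(AF' has_real_derivative AF1' y) (at y)"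
  unfolding AF_def[abs_def] AF1_def using R_pos[OF y] by (auto intro!: derivative_eq_intros dR dHF y simp: field_simps eval_nat_numeral)
lemma dAF1: assumes y: "y \<in> SS" shows "(AF1' has_real_derivative AF2' y) (at y)"
  unfolding AF1_def[abs_def] AF2_def using R_pos[OF y] by (auto intro!: derivative_eq_intros dR dHF y simp: field_simps eval_nat_numeral)
lemma dKF: assumes y: "y \<in> SS" shows "(KF' has_real_derivative KF1' y) (at y)"
  unfolding KF_def[abs_def] KF1_def using R_pos[OF y] by (auto intro!: derivative_eq_intros dR dHF y simp: field_simps eval_nat_numeral)
lemma dKF1: assumes y: "y \<in> SS" shows "(KF1' has_real_derivative KF2' y) (at y)"
  unfolding KF1_def[abs_def] KF2_def using R_pos[OF y] by (auto intro!: derivative_eq_intros dR dHF y simp: field_simps eval_nat_numeral)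
lemma dGF: assumes y: "y \<in> SS" shows "(GF' has_real_derivative GF1' y) (at y)"
  unfolding GF_def[abs_def] GF1_def using R_pos[OF y] by (auto intro!: derivative_eq_intros dR dHF y simp: field_simps eval_nat_numeral)
lemma dGF1: assumes y: "y \<in> SS" shows "(GF1' has_real_derivative GF2' y) (at y)"
  unfolding GF1_def[abs_def] GF2_def using R_pos[OF y] by (auto intro!: derivative_eq_intros dR dHF y simp: field_simps eval_nat_numeral)
lemma dTF: assumes y: "y \<in> SS" shows "(TF' has_real_derivative TF1' y) (at y)"
  unfolding TF_def[abs_def] TF1_def using R_pos[OF y] by (auto intro!: derivative_eq_intros dR dHF y simp: field_simps eval_nat_numeral)
lemma dTF1: assumes y: "y \<in> SS" shows "(TF1' has_real_derivative TF2' y) (at y)"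
  unfolding TF1_def[abs_def] TF2_def using R_pos[OF y] by (auto intro!: derivative_eq_intros dR dHF y simp: field_simps eval_nat_numeral)

lemma c2_zero:
  fixes C0 C2 q :: real
  assumes y: "y \<in> SS"
  defines "U01 \<equiv> R p0^2 * (C0 * GF1' y + KF1' y)" and "U21 \<equiv> R p0^2 * (C2 * TF1' y + KF1' y)"
    and "U02 \<equiv> R p0^2 * (C0 * GF2' y + KF2' y)" and "U22 \<equiv> R p0^2 * (C2 * TF2' y + KF2' y)"
    and "U2 \<equiv> R p0^2 * (C2 * TF' y + KF' y)"
  shows "(-3) * \<gamma> * (1 / R y) * (1 / R y) * (U01 + U21 * cos (2*q))
     + (-3) * \<gamma> * (1 / R y) * (AF1' y * cos q) * (AF1' y * cos q)
     + (- AF' y * sin q) * (- AF' y * sin q) * (\<gamma> / R y ^ 3)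
     + (-2) * (- AF' y * sin q) * (1 / R y) * (- AF1' y * sin q)
     + (1 / R y) * (1 / R y) * (-4 * U2 * cos (2*q))
     + 2 * (1 / R y) * (AF1' y * cos q) * (- AF' y * cos q)
     + (U02 + U22 * cos (2*q)) = 0"
proof -
  have r: "R y > 0" using R_pos y by auto
  have hyp: "cosh (HF y) ^ 2 - sinh (HF y) ^ 2 = 1" by (simp add: cosh_square_eq)
  have trig: "sin q ^ 2 + cos q ^ 2 = 1" by simp
  show ?thesis
    unfolding U01_def U21_def U02_def U22_def U2_def AF_def AF1_def GF1_def GF2_def TF_def TF1_def TF2_def KF_def KF1_def KF2_def
      sinh_double cosh_double cos_double
    using hyp trig
    apply (simp only: divide_inverse inverse_mult_distrib power_inverse[symmetric])
    by algebra
qed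

end


lemma bnd:
  fixes g \<gamma> p0 lam q :: real
  assumes hg: "g > 0" and hp0: "p0 < 0"
    and hlam: "lam > 0" and hlam2: "lam - 2 * \<gamma> * p0 > 0"
    and hne: "g - \<gamma> * sqrt lam \<noteq> 0"
    and disp: "lam / (g - \<gamma> * sqrt lam) + tanh (2 * p0 / (sqrt lam + sqrt (lam - 2 * \<gamma> * p0))) = 0"
    and hDelta: "Delta g lam \<gamma> \<noteq> 0"
    and hden: "2 * g * p0 + lam * rr lam \<gamma> p0 + sqrt lam * (rr lam \<gamma> p0)^2 \<noteq> 0"
  defines "Q \<equiv> Qstar g lam \<gamma> p0"
    and "a1 \<equiv> - AF lam \<gamma> p0 0 * sin q"
    and "v0 \<equiv> HH lam \<gamma> p0 0" and "v1 \<equiv> AF lam \<gamma> p0 0 * cos q"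
    and "v2 \<equiv> rr lam \<gamma> p0 ^ 2 * (C0 g lam \<gamma> p0 * GF lam \<gamma> p0 0 + KF lam \<gamma> p0 0)
              + rr lam \<gamma> p0 ^ 2 * (C2 g lam \<gamma> * TF lam \<gamma> p0 0 + KF lam \<gamma> p0 0) * cos (2*q)"
    and "d0 \<equiv> 1 / rr lam \<gamma> 0" and "d1 \<equiv> AF1 lam \<gamma> p0 0 * cos q"
    and "d2 \<equiv> rr lam \<gamma> p0 ^ 2 * (C0 g lam \<gamma> p0 * GF1 lam \<gamma> p0 0 + KF1 lam \<gamma> p0 0)
              + rr lam \<gamma> p0 ^ 2 * (C2 g lam \<gamma> * TF1 lam \<gamma> p0 0 + KF1 lam \<gamma> p0 0) * cos (2*q)"
  shows "1 - Q * d0 * d0 + 2 * d0 * d0 * g * v0 = 0"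
    and "(-2) * Q * d0 * d1 + 2 * d0 * d0 * g * v1 + 4 * d0 * d1 * g * v0 = 0"
    and "(-2) * Q * d0 * d2 - Q * d1 * d1 + a1 * a1 + 2 * d0 * d0 * g * v2 + 4 * d0 * d1 * g * v1
          + 4 * d0 * d2 * g * v0 + 2 * d1 * d1 * g * v0 = 0"
proof -
  define sl where "sl = sqrt lam"
  define r0 where "r0 = rr lam \<gamma> p0"
  define H0 where "H0 = HH lam \<gamma> p0 0"
  define s where "s = sinh H0"
  define c where "c = cosh H0"
  define T where "T = g - \<gamma> * sl"
  define D where "D = T^2 - lam^2"
  have sl: "sl > 0" "sl^2 = lam" using hlam by (auto simp: sl_def)
  have R0: "rr lam \<gamma> 0 = sl" by (simp add: rr_def sl_def)
  have r0: "r0 > 0" "r0^2 = lam - 2*\<gamma>*p0" using hlam2 by (auto simp: r0_def rr_def)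
  have H0: "H0 = - 2 * p0 / (sl + r0)" by (simp add: H0_def HH_def R0 r0_def)
  have H0': "H0 * (sl + r0) = - 2 * p0" using sl r0 by (simp add: H0)
  have Q: "Q = lam + 2 * g * H0"
    using sl r0 by (simp add: Q_def Qstar_def H0 r0_def[symmetric] sl_def[symmetric] field_simps)
  have T: "T \<noteq> 0" using hne by (simp add: T_def sl_def)
  have D: "D \<noteq> 0" using hDelta by (simp add: D_def Delta_def T_def sl_def)
  have "tanh H0 = lam / T"
  proof -
    have "2 * p0 / (sqrt lam + sqrt (lam - 2 * \<gamma> * p0)) = - H0"
      by (simp add: H0 sl_def r0_def rr_def)
    then show ?thesis using disp by (simp add: T_def sl_def)
  qed
  then have st: "s * T = lam * c" using T by (simp add: tanh_def s_def c_def field_simps)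
  have sc1: "c^2 - s^2 = 1" by (simp add: s_def c_def cosh_square_eq)
  have cc: "c^2 * D = T^2"
  proof -
    have "c^2 * D = c^2 * T^2 - (s*T)^2" unfolding st by (simp add: D_def power_mult_distrib algebra_simps)
    also have "\<dots> = T^2" using sc1 by (simp add: power_mult_distrib algebra_simps)
    finally show ?thesis .
  qed
  show "1 - Q * d0 * d0 + 2 * d0 * d0 * g * v0 = 0"
    using sl hlam by (simp add: Q d0_def v0_def R0 H0_def[symmetric] field_simps power2_eq_square)
  show "(-2) * Q * d0 * d1 + 2 * d0 * d0 * g * v1 + 4 * d0 * d1 * g * v0 = 0"
  proof -
    have "(-2) * Q * d0 * d1 + 2 * d0 * d0 * g * v1 + 4 * d0 * d1 * g * v0
       = 2 * r0 * cos q * (g * s - lam * c - \<gamma> * sl * s) / sl^3"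
      using sl hlam unfolding Q d0_def d1_def v0_def v1_def
      by (simp add: R0 AF_def AF1_def H0_def[symmetric] r0_def[symmetric] s_def[symmetric] c_def[symmetric] field_simps eval_nat_numeral)
    also have "\<dots> = 0" using st by (simp add: T_def algebra_simps)
    finally show ?thesis .
  qed
  show "(-2) * Q * d0 * d2 - Q * d1 * d1 + a1 * a1 + 2 * d0 * d0 * g * v2 + 4 * d0 * d1 * g * v1
          + 4 * d0 * d2 * g * v0 + 2 * d1 * d1 * g * v0 = 0"
  proof -
    have ss: "s^2 * D = lam^2"
    proof -
      have "(s*T)^2 * D = lam^2 * T^2" unfolding st using cc by (simp add: power_mult_distrib algebra_simps)
      then show ?thesis using T by (simp add: power_mult_distrib algebra_simps)
    qed
    have scD: "s * c * D = lam * T"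
    proof -
      have "(s*T) * c * D = lam * T * T" unfolding st using cc by (simp add: power2_eq_square algebra_simps)
      then show ?thesis using T by (simp add: algebra_simps)
    qed
    define X where "X = 3 * g * T + lam * (\<gamma>^2 - lam)"
    define Y where "Y = 3 * g * T + lam * (\<gamma>^2 - 3 * lam)"
    define den where "den = 2 * g * p0 + lam * r0 + sl * r0^2"
    have den: "den \<noteq> 0" using hden by (simp add: den_def r0_def sl_def)
    have C0: "C0 g lam \<gamma> p0 = sl * X * (sl + r0) / (4 * D * den)"
      by (simp add: add.commute C0_def X_def den_def D_def Delta_def T_def sl_def r0_def)
    have C2: "C2 g lam \<gamma> = Y / (8 * sl^5)"
    proof -
      have "lam powr (5/2) = sl^5"
        using hlam by (simp add: sl_def powr_half_sqrt[symmetric] powr_realpow[symmetric] powr_powr)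
      then show ?thesis by (simp add: C2_def Y_def T_def sl_def)
    qed
    have dd: "(2*g*H0 - 2*lam - 2*\<gamma> * sl*H0) * (sl + r0) = - 2 * den"
    proof -
      have "(2*g*H0 - 2*lam - 2*\<gamma> * sl*H0) * (sl + r0) = 2*g*(H0*(sl+r0)) - 2*lam*(sl+r0) - 2*\<gamma> * sl*(H0*(sl+r0))"
        by (simp add: algebra_simps)
      also have "\<dots> = - 2 * den" unfolding H0' den_def r0(2) sl(2)[symmetric]
        by (simp add: algebra_simps power2_eq_square)
      finally show ?thesis .
    qed
    have Fc0: "r0^2 * C0 g lam \<gamma> p0 * (2*g*H0/sl^3 - 2/sl - 2*\<gamma>*H0/sl^2) = - (r0^2 * X / (2 * D * lam))"
    proof -
      have "2*g*H0/sl^3 - 2/sl - 2*\<gamma>*H0/sl^2 = (2*g*H0 - 2*lam - 2*\<gamma> * sl*H0) / sl^3"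
        unfolding sl(2)[symmetric] using sl(1) by (simp add: field_simps eval_nat_numeral)
      also have "\<dots> = - 2 * den / ((sl + r0) * sl^3)"
      proof -
        have "sl + r0 > 0" using sl r0 by simp
        then have "2*g*H0 - 2*lam - 2*\<gamma> * sl*H0 = - 2 * den / (sl + r0)"
          using dd by (simp add: field_simps)
        then show ?thesis by simp
      qed
      finally have E: "2*g*H0/sl^3 - 2/sl - 2*\<gamma>*H0/sl^2 = - 2 * den / ((sl + r0) * sl^3)" .
      obtain w where w: "w = sl + r0" "w > 0" using sl r0 by simp
      show ?thesis unfolding E C0 unfolding sl(2)[symmetric] w(1)[symmetric] using sl(1) w(2) D den
        by (simp add: field_simps eval_nat_numeral)
    qed
    define A where "A = AF lam \<gamma> p0 0"
    define A1 where "A1 = AF1 lam \<gamma> p0 0"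
    define U0 where "U0 = r0^2 * (C0 g lam \<gamma> p0 * GF lam \<gamma> p0 0 + KF lam \<gamma> p0 0)"
    define U2 where "U2 = r0^2 * (C2 g lam \<gamma> * TF lam \<gamma> p0 0 + KF lam \<gamma> p0 0)"
    define U01 where "U01 = r0^2 * (C0 g lam \<gamma> p0 * GF1 lam \<gamma> p0 0 + KF1 lam \<gamma> p0 0)"
    define U21 where "U21 = r0^2 * (C2 g lam \<gamma> * TF1 lam \<gamma> p0 0 + KF1 lam \<gamma> p0 0)"
    define \<alpha> where "\<alpha> = A^2 + (2*g/lam) * (U0 - U2) - 2 * sl * (U01 - U21)"
    define \<beta> where "\<beta> = - (A^2) + (4*g/lam) * U2 + (4*g/sl) * A * A1 - lam * A1^2 - 4 * sl * U21"
    have step1: "(-2) * Q * d0 * d2 - Q * d1 * d1 + a1 * a1 + 2 * d0 * d0 * g * v2 + 4 * d0 * d1 * g * v1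
          + 4 * d0 * d2 * g * v0 + 2 * d1 * d1 * g * v0 = \<alpha> + \<beta> * cos q ^ 2"
    proof -
      have "(-2) * Q * d0 * d2 - Q * d1 * d1 + a1 * a1 + 2 * d0 * d0 * g * v2 + 4 * d0 * d1 * g * v1
          + 4 * d0 * d2 * g * v0 + 2 * d1 * d1 * g * v0
          = A^2 * sin q ^ 2 + (2*g/lam) * (U0 + U2 * cos (2*q)) + (4*g/sl) * A * A1 * cos q ^ 2
            - lam * A1^2 * cos q ^ 2 - 2 * sl * (U01 + U21 * cos (2*q))"
        unfolding Q a1_def v0_def v1_def v2_def d0_def d1_def d2_def R0 A_def[symmetric] A1_def[symmetric]
          r0_def[symmetric] U0_def[symmetric] U2_def[symmetric] U01_def[symmetric] U21_def[symmetric] H0_def[symmetric]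
        unfolding sl(2)[symmetric] using sl(1)
        by (simp add: field_simps power2_eq_square)
      also have "\<dots> = \<alpha> + \<beta> * cos q ^ 2"
        unfolding \<alpha>_def \<beta>_def cos_double sin_squared_eq by (simp add: algebra_simps diff_divide_distrib)
      finally show ?thesis .
    qed
    have s2: "sinh (2*H0) = 2* s*c" and c2: "cosh (2*H0) = c^2 + s^2"
      by (simp_all add: s_def c_def sinh_double cosh_double)
    have G: "GF lam \<gamma> p0 0 = H0/sl" and G1: "GF1 lam \<gamma> p0 0 = 1/sl^2 + \<gamma>*H0/sl^3"
      and T0: "TF lam \<gamma> p0 0 = 2* s*c/sl" and T1: "TF1 lam \<gamma> p0 0 = 2*(c^2+s^2)/sl^2 + \<gamma>*(2* s*c)/sl^3"
      and K0: "KF lam \<gamma> p0 0 = - \<gamma> * (1 - (c^2+s^2)) / (8 * sl ^ 3) + 2* s*c / (4 * sl ^ 2)"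
      and K1: "KF1 lam \<gamma> p0 0 = 3 * \<gamma>^2 * ((c^2+s^2) - 1) / (8 * sl ^ 5) + 3 * \<gamma> * (2* s*c) / (4 * sl ^ 4) + (c^2+s^2) / (2 * sl ^ 3)"
      and A0: "A = r0 * s / sl" and A10: "A1 = r0 * (c / sl^2 + \<gamma> * s / sl^3)"
      by (simp_all add: GF_def GF1_def TF_def TF1_def KF_def KF1_def A_def A1_def AF_def AF1_def R0
            H0_def[symmetric] r0_def[symmetric] s2 c2 s_def[symmetric] c_def[symmetric])
    have Tsc: "T* s*c = lam*c^2" using st by (simp add: power2_eq_square algebra_simps)
    have Cpart: "2*g*TF lam \<gamma> p0 0/lam - 2* sl*TF1 lam \<gamma> p0 0 = -4* s^2/sl"
    proof -
      have "(2*g*TF lam \<gamma> p0 0/lam - 2* sl*TF1 lam \<gamma> p0 0) * sl^3 = 4*(T* s*c - lam*c^2 - lam* s^2)"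
        unfolding T0 T1 T_def unfolding sl(2)[symmetric] using sl(1)
        by (simp add: field_simps eval_nat_numeral)
      then have "(2*g*TF lam \<gamma> p0 0/lam - 2 * sl*TF1 lam \<gamma> p0 0) * sl^3 = sl^2 * (-4 * s^2)"
        unfolding Tsc by (simp add: sl(2) algebra_simps)
      then have "sl^2 * ((2*g*TF lam \<gamma> p0 0/lam - 2 * sl*TF1 lam \<gamma> p0 0) * sl) = sl^2 * (-4 * s^2)"
        by (simp add: eval_nat_numeral algebra_simps)
      then have "(2*g*TF lam \<gamma> p0 0/lam - 2 * sl*TF1 lam \<gamma> p0 0) * sl = -4 * s^2"
        using sl(1) by (subst (asm) mult_left_cancel) auto
      then show ?thesis using sl(1) by (simp add: field_simps)
    qed
    have C0part: "2*g*GF lam \<gamma> p0 0/lam - 2* sl*GF1 lam \<gamma> p0 0 = 2*g*H0/sl^3 - 2/sl - 2*\<gamma>*H0/sl^2"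
      unfolding G G1 unfolding sl(2)[symmetric] using sl(1) by (simp add: field_simps eval_nat_numeral)
    have alpha: "\<alpha> = 0"
    proof -
      have "\<alpha> = r0^2 * s^2/lam + r0^2 * C0 g lam \<gamma> p0 * (2*g*GF lam \<gamma> p0 0/lam - 2* sl*GF1 lam \<gamma> p0 0)
                 - r0^2 * C2 g lam \<gamma> * (2*g*TF lam \<gamma> p0 0/lam - 2* sl*TF1 lam \<gamma> p0 0)"
        unfolding \<alpha>_def A0 U0_def U2_def U01_def U21_def unfolding sl(2)[symmetric] using sl(1)
        by (simp add: field_simps power2_eq_square)
      also have "\<dots> = r0^2 * s^2/lam - (r0^2 * X / (2 * D * lam)) + r0^2 * (Y / (8 * sl^5)) * (4* s^2/sl)"
        unfolding Cpart C0part Fc0 C2 by simp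
      also have "\<dots> = r0^2 * (s^2 * D) / (lam * D) - (r0^2 * X / (2 * D * lam)) + r0^2 * Y * (s^2 * D) / (2 * lam^3 * D)"
        using D sl by (simp add: field_simps eval_nat_numeral)
      also have "\<dots> = r0^2 * (2 * lam^2 - X + Y) / (2 * lam * D)"
        unfolding ss using D hlam by (simp add: field_simps eval_nat_numeral)
      also have "\<dots> = 0" by (simp add: X_def Y_def algebra_simps power2_eq_square)
      finally show ?thesis .
    qed
    have beta: "\<beta> = 0"
    proof -
      define bss where "bss = -1/sl^2 - Y/sl^6 + g*\<gamma>/(2* sl^5) + 4*g*\<gamma>/sl^5 - \<gamma>^2/sl^4 - 3*\<gamma>^2/(2* sl^4) - 2/sl^2"
      define bcc where "bcc = g*\<gamma>/(2* sl^5) - 1/sl^2 - 3*\<gamma>^2/(2* sl^4) - 2/sl^2"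
      define bsc where "bsc = 6*g/sl^4 - 8*\<gamma>/sl^3"
      define b1 where "b1 = - g*\<gamma>/(2* sl^5) + 3*\<gamma>^2/(2* sl^4)"
      have "\<beta> = r0^2 * (- (s^2/lam) + 4*g*KF lam \<gamma> p0 0/lam + 4*g * s*(c/sl^2 + \<gamma> * s/sl^3)/sl^2
                 - sl^2*(c/sl^2 + \<gamma> * s/sl^3)^2 - 4 * sl*KF1 lam \<gamma> p0 0
                 + 2 * C2 g lam \<gamma> * (2*g*TF lam \<gamma> p0 0/lam - 2 * sl*TF1 lam \<gamma> p0 0))"
        unfolding \<beta>_def A0 A10 U2_def U21_def unfolding sl(2)[symmetric] using sl(1)
        by (simp add: field_simps power2_eq_square)
      also have "\<dots> = r0^2 * (- (s^2/lam) + 4*g*KF lam \<gamma> p0 0/lam + 4*g * s*(c/sl^2 + \<gamma> * s/sl^3)/sl^2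
                 - sl^2*(c/sl^2 + \<gamma> * s/sl^3)^2 - 4 * sl*KF1 lam \<gamma> p0 0
                 - Y * s^2 / sl^6)"
        unfolding Cpart C2 using sl(1) by (simp add: field_simps eval_nat_numeral)
      also have "\<dots> = r0^2 * (bss * s^2 + bcc * c^2 + bsc * (s*c) + b1)"
        unfolding K0 K1 bss_def bcc_def bsc_def b1_def unfolding sl(2)[symmetric] using sl(1)
        by (simp add: field_simps eval_nat_numeral)
      also have "bss * s^2 + bcc * c^2 + bsc * (s*c) + b1 = (bss * lam^2 + bcc * T^2 + bsc * (lam * T) + b1 * D) / D"
      proof -
        have "(bss * s^2 + bcc * c^2 + bsc * (s*c) + b1) * D = bss * (s^2 * D) + bcc * (c^2 * D) + bsc * (s*c*D) + b1 * D"
          by (simp add: algebra_simps)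
        then show ?thesis unfolding ss cc scD using D by (simp add: field_simps)
      qed
      also have "bss * lam^2 + bcc * T^2 + bsc * (lam * T) + b1 * D = 0"
        unfolding bss_def bcc_def bsc_def b1_def D_def T_def Y_def sl(2)[symmetric] using sl(1)
        by (simp add: field_simps eval_nat_numeral)
      finally show ?thesis by simp
    qed
    show ?thesis unfolding step1 alpha beta by simp
  qed
qed

lemma c1_zero:
  assumes "lam > 0" "2 * \<gamma> * y < lam"
  shows "(-3) * \<gamma> * (1 / rr lam \<gamma> y) * (1 / rr lam \<gamma> y) * (AF1 lam \<gamma> p0 y * cos q)
     + (1 / rr lam \<gamma> y) * (1 / rr lam \<gamma> y) * (- AF lam \<gamma> p0 y * cos q) + AF2 lam \<gamma> p0 y * cos q = 0"
proof -
  have "rr lam \<gamma> y > 0" using assms by (simp add: rr_def)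
  then show ?thesis by (simp add: AF_def AF1_def AF2_def field_simps eval_nat_numeral)
qed

definition cHf :: "real \<Rightarrow> real \<Rightarrow> real \<Rightarrow> real \<Rightarrow> real \<Rightarrow> real \<Rightarrow> real \<Rightarrow> real \<Rightarrow> real \<Rightarrow> real \<Rightarrow> real \<Rightarrow> real \<Rightarrow> real \<Rightarrow> nat \<Rightarrow> real" where
  "cHf \<gamma> a1 a2 d0 d1 d2 e0 e1 e2 f1 f2 k1 k2 k =
    (if k = 3 then (-6) * \<gamma> * d0 * d1 * d2 - \<gamma> * d1 * d1 * d1 + a1 * a1 * e1 + (2) * a1 * a2 * e0 + (-2) * a1 * d0 * f2 + (-2) * a1 * d1 * f1 + (-2) * a2 * d0 * f1 + (2) * d0 * d1 * k2 + (2) * d0 * d2 * k1 + d1 * d1 * k1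
     else if k = 4 then (-3) * \<gamma> * d0 * d2 * d2 + (-3) * \<gamma> * d1 * d1 * d2 + a1 * a1 * e2 + (2) * a1 * a2 * e1 + (-2) * a1 * d1 * f2 + (-2) * a1 * d2 * f1 + a2 * a2 * e0 + (-2) * a2 * d0 * f2 + (-2) * a2 * d1 * f1 + (2) * d0 * d2 * k2 + d1 * d1 * k2 + (2) * d1 * d2 * k1
     else if k = 5 then (-3) * \<gamma> * d1 * d2 * d2 + (2) * a1 * a2 * e2 + (-2) * a1 * d2 * f2 + a2 * a2 * e1 + (-2) * a2 * d1 * f2 + (-2) * a2 * d2 * f1 + (2) * d1 * d2 * k2 + d2 * d2 * k1
     else - \<gamma> * d2 * d2 * d2 + a2 * a2 * e2 + (-2) * a2 * d2 * f2 + d2 * d2 * k2)"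

lemma set3_6: "{3..6::nat} = {3,4,5,6}" by auto

lemma expH:
  fixes b :: real
  assumes "- \<gamma> * d0 * d0 * d0 + e0 = 0"
    and "(-3) * \<gamma> * d0 * d0 * d1 + d0 * d0 * k1 + e1 = 0"
    and "(-3) * \<gamma> * d0 * d0 * d2 + (-3) * \<gamma> * d0 * d1 * d1 + a1 * a1 * e0 + (-2) * a1 * d0 * f1 + d0 * d0 * k2 + (2) * d0 * d1 * k1 + e2 = 0"
  shows "(1 + (b * a1 + b^2 * a2)^2) * (e0 + b * e1 + b^2 * e2)
     - 2 * (d0 + b * d1 + b^2 * d2) * (b * a1 + b^2 * a2) * (b * f1 + b^2 * f2)
     + (d0 + b * d1 + b^2 * d2)^2 * (b * k1 + b^2 * k2)
     - \<gamma> * (d0 + b * d1 + b^2 * d2)^3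
     = (\<Sum>k\<in>{3..6}. cHf \<gamma> a1 a2 d0 d1 d2 e0 e1 e2 f1 f2 k1 k2 k * b^k)"
proof -
  have "(1 + (b * a1 + b^2 * a2)^2) * (e0 + b * e1 + b^2 * e2)
     - 2 * (d0 + b * d1 + b^2 * d2) * (b * a1 + b^2 * a2) * (b * f1 + b^2 * f2)
     + (d0 + b * d1 + b^2 * d2)^2 * (b * k1 + b^2 * k2)
     - \<gamma> * (d0 + b * d1 + b^2 * d2)^3
     = (- \<gamma> * d0 * d0 * d0 + e0) + ((-3) * \<gamma> * d0 * d0 * d1 + d0 * d0 * k1 + e1) * b
       + ((-3) * \<gamma> * d0 * d0 * d2 + (-3) * \<gamma> * d0 * d1 * d1 + a1 * a1 * e0 + (-2) * a1 * d0 * f1 + d0 * d0 * k2 + (2) * d0 * d1 * k1 + e2) * b^2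
       + (\<Sum>k\<in>{3..6}. cHf \<gamma> a1 a2 d0 d1 d2 e0 e1 e2 f1 f2 k1 k2 k * b^k)"
    unfolding set3_6 by (simp add: cHf_def) algebra
  then show ?thesis using assms by simp
qed

definition cBf :: "real \<Rightarrow> real \<Rightarrow> real \<Rightarrow> real \<Rightarrow> real \<Rightarrow> real \<Rightarrow> real \<Rightarrow> real \<Rightarrow> real \<Rightarrow> real \<Rightarrow> nat \<Rightarrow> real" where
  "cBf g Q a1 a2 d0 d1 d2 v0 v1 v2 k =
    (if k = 3 then (-2) * Q * d1 * d2 + (2) * a1 * a2 + (4) * d0 * d1 * g * v2 + (4) * d0 * d2 * g * v1 + (2) * d1 * d1 * g * v1 + (4) * d1 * d2 * g * v0
     else if k = 4 then - Q * d2 * d2 + a2 * a2 + (4) * d0 * d2 * g * v2 + (2) * d1 * d1 * g * v2 + (4) * d1 * d2 * g * v1 + (2) * d2 * d2 * g * v0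
     else if k = 5 then (4) * d1 * d2 * g * v2 + (2) * d2 * d2 * g * v1
     else (2) * d2 * d2 * g * v2)"

lemma expB:
  fixes b :: real
  assumes "1 - Q * d0 * d0 + (2) * d0 * d0 * g * v0 = 0"
    and "(-2) * Q * d0 * d1 + (2) * d0 * d0 * g * v1 + (4) * d0 * d1 * g * v0 = 0"
    and "(-2) * Q * d0 * d2 - Q * d1 * d1 + a1 * a1 + (2) * d0 * d0 * g * v2 + (4) * d0 * d1 * g * v1 + (4) * d0 * d2 * g * v0 + (2) * d1 * d1 * g * v0 = 0"
  shows "1 + (b * a1 + b^2 * a2)^2 + (2 * g * (v0 + b * v1 + b^2 * v2) - Q) * (d0 + b * d1 + b^2 * d2)^2
     = (\<Sum>k\<in>{3..6}. cBf g Q a1 a2 d0 d1 d2 v0 v1 v2 k * b^k)"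
proof -
  have "1 + (b * a1 + b^2 * a2)^2 + (2 * g * (v0 + b * v1 + b^2 * v2) - Q) * (d0 + b * d1 + b^2 * d2)^2
     = (1 - Q * d0 * d0 + (2) * d0 * d0 * g * v0) + ((-2) * Q * d0 * d1 + (2) * d0 * d0 * g * v1 + (4) * d0 * d1 * g * v0) * b
      + ((-2) * Q * d0 * d2 - Q * d1 * d1 + a1 * a1 + (2) * d0 * d0 * g * v2 + (4) * d0 * d1 * g * v1 + (4) * d0 * d2 * g * v0 + (2) * d1 * d1 * g * v0) * b^2
      + (\<Sum>k\<in>{3..6}. cBf g Q a1 a2 d0 d1 d2 v0 v1 v2 k * b^k)"
    unfolding set3_6 by (simp add: cBf_def) algebra
  then show ?thesis using assms by simp
qed


theorem mainTheorem3:
  fixes g \<gamma> p0 lam :: real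
  assumes hg: "g > 0" and hp0: "p0 < 0"
    and hlam: "lam > 0" and hlam2: "lam - 2 * \<gamma> * p0 > 0"
    and hne: "g - \<gamma> * sqrt lam \<noteq> 0"
    and disp: "lam / (g - \<gamma> * sqrt lam) + tanh (2 * p0 / (sqrt lam + sqrt (lam - 2 * \<gamma> * p0))) = 0"
    and hDelta: "Delta g lam \<gamma> \<noteq> 0"
    and hden: "2 * g * p0 + lam * rr lam \<gamma> p0 + sqrt lam * (rr lam \<gamma> p0)^2 \<noteq> 0"
  shows
    "(\<exists>N c. \<forall>b q p. q \<in> {-pi..pi} \<longrightarrow> p \<in> {p0..0} \<longrightarrow>
        opH \<gamma> (hstar g lam \<gamma> p0 b) q p = (\<Sum>k\<in>{3..N}. c k q p * b^k))
   \<and> (\<exists>N c. \<forall>b q.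
        opB0 g (Qstar g lam \<gamma> p0) (hstar g lam \<gamma> p0 b) q = (\<Sum>k\<in>{3..N}. c k q * b^k))
   \<and> (\<forall>b q. opB1 p0 (hstar g lam \<gamma> p0 b) q = 0)"
proof -
  define S where "S = {y::real. 2 * \<gamma> * y < lam}"
  have openS: "open S" unfolding S_def using openSS[OF hlam hlam2] .
  define r0 where "r0 = rr lam \<gamma> p0"
  define U0f where "U0f = (\<lambda>y. r0^2 * (C0 g lam \<gamma> p0 * GF lam \<gamma> p0 y + KF lam \<gamma> p0 y))"
  define U2f where "U2f = (\<lambda>y. r0^2 * (C2 g lam \<gamma> * TF lam \<gamma> p0 y + KF lam \<gamma> p0 y))"
  define U01f where "U01f = (\<lambda>y. r0^2 * (C0 g lam \<gamma> p0 * GF1 lam \<gamma> p0 y + KF1 lam \<gamma> p0 y))"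
  define U21f where "U21f = (\<lambda>y. r0^2 * (C2 g lam \<gamma> * TF1 lam \<gamma> p0 y + KF1 lam \<gamma> p0 y))"
  define U02f where "U02f = (\<lambda>y. r0^2 * (C0 g lam \<gamma> p0 * GF2 lam \<gamma> p0 y + KF2 lam \<gamma> p0 y))"
  define U22f where "U22f = (\<lambda>y. r0^2 * (C2 g lam \<gamma> * TF2 lam \<gamma> p0 y + KF2 lam \<gamma> p0 y))"
  have hs: "hstar g lam \<gamma> p0 b = (\<lambda>q y. HH lam \<gamma> p0 y + b * (AF lam \<gamma> p0 y * cos q)
              + b^2 * (U0f y + U2f y * cos (2*q)))" for b
    by (auto simp: fun_eq_iff hstar_def mm_def uu_def Let_def AF_def U0f_def U2f_def r0_def GF_def TF_def KF_def
        algebra_simps add_divide_distrib diff_divide_distrib)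
  note ders = dHF[OF hlam hlam2] dH1[OF hlam hlam2] dAF[OF hlam hlam2] dAF1[OF hlam hlam2]
    dGF[OF hlam hlam2] dGF1[OF hlam hlam2] dTF[OF hlam hlam2] dTF1[OF hlam hlam2]
    dKF[OF hlam hlam2] dKF1[OF hlam hlam2]
  have dU0: "(U0f has_real_derivative U01f y) (at y)" if "y \<in> S" for y
    unfolding U0f_def U01f_def using that unfolding S_def
    by (auto intro!: derivative_eq_intros ders)
  have dU01: "(U01f has_real_derivative U02f y) (at y)" if "y \<in> S" for y
    unfolding U01f_def U02f_def using that unfolding S_def
    by (auto intro!: derivative_eq_intros ders)
  have dU2: "(U2f has_real_derivative U21f y) (at y)" if "y \<in> S" for y
    unfolding U2f_def U21f_def using that unfolding S_def
    by (auto intro!: derivative_eq_intros ders)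
  have dU21: "(U21f has_real_derivative U22f y) (at y)" if "y \<in> S" for y
    unfolding U21f_def U22f_def using that unfolding S_def
    by (auto intro!: derivative_eq_intros ders)
  have dH: "(HH lam \<gamma> p0 has_real_derivative (\<lambda>y. 1 / rr lam \<gamma> y) y) (at y)" if "y \<in> S" for y
    using that ders unfolding S_def by simp
  have dH1': "((\<lambda>y. 1 / rr lam \<gamma> y) has_real_derivative (\<lambda>y. \<gamma> / rr lam \<gamma> y ^ 3) y) (at y)" if "y \<in> S" for y
    using that ders unfolding S_def by simp
  have dA: "(AF lam \<gamma> p0 has_real_derivative AF1 lam \<gamma> p0 y) (at y)" if "y \<in> S" for y
    using that ders unfolding S_def by simp
  have dA1: "(AF1 lam \<gamma> p0 has_real_derivative AF2 lam \<gamma> p0 y) (at y)" if "y \<in> S" for y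
    using that ders unfolding S_def by simp
  note PS = pd_struct[OF openS _ dH dH1' dA dA1 dU0 dU01 dU2 dU21 hs]
  have pS: "p \<in> S" if "p \<in> {p0..0}" for p
  proof (cases "\<gamma> \<ge> 0")
    case True
    then have "2 * \<gamma> * p \<le> 0" using that by (simp add: mult_nonneg_nonpos)
    then show ?thesis using hlam by (simp add: S_def)
  next
    case False
    then have "2 * \<gamma> * p \<le> 2 * \<gamma> * p0" using that by (simp add: mult_le_cancel_left)
    then show ?thesis using hlam2 by (simp add: S_def)
  qed
  have part1: "\<exists>N c. \<forall>b q p. q \<in> {-pi..pi} \<longrightarrow> p \<in> {p0..0} \<longrightarrow>
        opH \<gamma> (hstar g lam \<gamma> p0 b) q p = (\<Sum>k\<in>{3..N}. c k q p * b^k)"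
  proof (intro exI allI impI)
    fix b q p assume "q \<in> {-pi..pi}" and pp: "p \<in> {p0..0}"
    have p: "p \<in> S" using pS[OF pp] .
    have rp: "rr lam \<gamma> p > 0" using p by (simp add: S_def rr_def)
    show "opH \<gamma> (hstar g lam \<gamma> p0 b) q p = (\<Sum>k\<in>{3..6}.
        (\<lambda>k q p. cHf \<gamma> (- AF lam \<gamma> p0 p * sin q) (-2 * U2f p * sin (2*q)) (1 / rr lam \<gamma> p)
           (AF1 lam \<gamma> p0 p * cos q) (U01f p + U21f p * cos (2*q))
           (\<gamma> / rr lam \<gamma> p ^ 3) (AF2 lam \<gamma> p0 p * cos q) (U02f p + U22f p * cos (2*q))
           (- AF1 lam \<gamma> p0 p * sin q) (-2 * U21f p * sin (2*q))
           (- AF lam \<gamma> p0 p * cos q) (-4 * U2f p * cos (2*q)) k) k q p * b^k)"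
      apply (simp only: opH_def PS[OF p])
    proof (rule expH)
      show "- \<gamma> * (1 / rr lam \<gamma> p) * (1 / rr lam \<gamma> p) * (1 / rr lam \<gamma> p) + \<gamma> / rr lam \<gamma> p ^ 3 = 0"
        using rp by (simp add: field_simps eval_nat_numeral)
      show "(-3) * \<gamma> * (1 / rr lam \<gamma> p) * (1 / rr lam \<gamma> p) * (AF1 lam \<gamma> p0 p * cos q)
          + (1 / rr lam \<gamma> p) * (1 / rr lam \<gamma> p) * (- AF lam \<gamma> p0 p * cos q) + AF2 lam \<gamma> p0 p * cos q = 0"
        using c1_zero[of lam \<gamma> p p0 q] hlam p by (simp add: S_def)
      show "(-3) * \<gamma> * (1 / rr lam \<gamma> p) * (1 / rr lam \<gamma> p) * (U01f p + U21f p * cos (2*q))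
          + (-3) * \<gamma> * (1 / rr lam \<gamma> p) * (AF1 lam \<gamma> p0 p * cos q) * (AF1 lam \<gamma> p0 p * cos q)
          + (- AF lam \<gamma> p0 p * sin q) * (- AF lam \<gamma> p0 p * sin q) * (\<gamma> / rr lam \<gamma> p ^ 3)
          + (-2) * (- AF lam \<gamma> p0 p * sin q) * (1 / rr lam \<gamma> p) * (- AF1 lam \<gamma> p0 p * sin q)
          + (1 / rr lam \<gamma> p) * (1 / rr lam \<gamma> p) * (-4 * U2f p * cos (2*q))
          + (2) * (1 / rr lam \<gamma> p) * (AF1 lam \<gamma> p0 p * cos q) * (- AF lam \<gamma> p0 p * cos q)
          + (U02f p + U22f p * cos (2*q)) = 0"
        using c2_zero[OF hlam hlam2, of p "C0 g lam \<gamma> p0" "C2 g lam \<gamma>" q] p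
        by (simp add: S_def U01f_def U21f_def U02f_def U22f_def U2f_def r0_def)
    qed
  qed
  have part2: "\<exists>N c. \<forall>b q.
        opB0 g (Qstar g lam \<gamma> p0) (hstar g lam \<gamma> p0 b) q = (\<Sum>k\<in>{3..N}. c k q * b^k)"
  proof (intro exI allI)
    fix b q
    have z: "(0::real) \<in> S" using hlam by (simp add: S_def)
    note bb = bnd[OF hg hp0 hlam hlam2 hne disp hDelta hden]
    show "opB0 g (Qstar g lam \<gamma> p0) (hstar g lam \<gamma> p0 b) q = (\<Sum>k\<in>{3..6}.
        (\<lambda>k q. cBf g (Qstar g lam \<gamma> p0) (- AF lam \<gamma> p0 0 * sin q) (-2 * U2f 0 * sin (2*q)) (1 / rr lam \<gamma> 0)
           (AF1 lam \<gamma> p0 0 * cos q) (U01f 0 + U21f 0 * cos (2*q))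
           (HH lam \<gamma> p0 0) (AF lam \<gamma> p0 0 * cos q) (U0f 0 + U2f 0 * cos (2*q)) k) k q * b^k)"
      apply (simp only: opB0_def PS[OF z])
      apply (simp only: hs)
      apply (rule expB)
      using bb by (simp_all add: U0f_def U2f_def U01f_def U21f_def r0_def algebra_simps)
  qed
  have part3: "\<forall>b q. opB1 p0 (hstar g lam \<gamma> p0 b) q = 0"
    by (simp add: opB1_def hstar_def mm_def uu_def HH_def Let_def)
  show ?thesis using part1 part2 part3 by blast
qed

thm_deps mainTheorem3

end
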